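(* Let $X, Y, Z$ be Polish spaces and let $P: X \rightsquigarrow Y$ be a tight Feller kernel such that each $P(x,\cdot)$ has a continuous density $\rho_x$ with respect to a fixed reference Borel measure on $Y$. Let $\epsilon \in [0,1)$ and let $R \subseteq X \times Z$ and $S \subseteq Y \times Z$ be closed relations. If $P_!^\epsilon R \subseteq S$, then $R \subseteq P^{*,\epsilon} S$.
   Context: Markov kernel, Feller and tight as usual: $P(x,\cdot)$ Borel probability measures, $x \mapsto P(x,A)$ measurable; Feller means $x \mapsto \int\phi\,dP(x,\cdot)$ continuous for bounded continuous $\phi$; tight means for each compact $K \subseteq X$, $\eta>0$ there is compact $L$ with $P(x,L) \ge 1-\eta$ for $x \in K$. The $\epsilon$-highest density region is $\mathrm{supp}_\epsilon(P(x)) = \{y : \rho_x(y) \ge \lambda_\epsilon\}$ with $\lambda_\epsilon = \sup\{\lambda \ge 0 : P(x, \{y : \rho_x(y) \ge \lambda\}) \ge 1-\epsilon\}$. The $\epsilon$-pushforward is $P_!^\epsilon R = \overline{\bigcup_{(x,z) \in R} \mathrm{supp}_\epsilon(P(x)) \times \{z\}} \subseteq Y \times Z$ (closure). The $\epsilon$-pullback is $P^{*,\epsilon} S = \{(x,z) : P(x, S_z) \ge 1-\epsilon\}$ with $S_z = \{y : (y,z) \in S\}$. *)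

theory Defs
  imports "HOL-Probability.Probability"
begin

definition markov_kernel :: "('x::topological_space \<Rightarrow> 'y::topological_space measure) \<Rightarrow> bool" where
  "markov_kernel P \<longleftrightarrow>
     (\<forall>x. prob_space (P x) \<and> sets (P x) = sets borel) \<and>
     (\<forall>A \<in> sets (borel :: 'y measure). (\<lambda>x. measure (P x) A) \<in> borel_measurable borel)"

definition feller_kernel :: "('x::topological_space \<Rightarrow> 'y::topological_space measure) \<Rightarrow> bool" where
  "feller_kernel P \<longleftrightarrow>
     (\<forall>\<phi> :: 'y \<Rightarrow> real. continuous_on UNIV \<phi> \<and> bounded (range \<phi>) \<longrightarrow>
        continuous_on UNIV (\<lambda>x. \<integral>y. \<phi> y \<partial>P x))"

definition tight_kernel :: "('x::topological_space \<Rightarrow> 'y::topological_space measure) \<Rightarrow> bool" where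
  "tight_kernel P \<longleftrightarrow>
     (\<forall>K \<eta>. compact K \<and> (\<eta>::real) > 0 \<longrightarrow>
        (\<exists>L. compact L \<and> (\<forall>x\<in>K. measure (P x) L \<ge> 1 - \<eta>)))"

definition hd_level :: "('x \<Rightarrow> 'y measure) \<Rightarrow> ('x \<Rightarrow> 'y \<Rightarrow> real) \<Rightarrow> real \<Rightarrow> 'x \<Rightarrow> real" where
  "hd_level P \<rho> \<epsilon> x = Sup {l. l \<ge> 0 \<and> measure (P x) {y. \<rho> x y \<ge> l} \<ge> 1 - \<epsilon>}"

definition hd_supp :: "('x \<Rightarrow> 'y measure) \<Rightarrow> ('x \<Rightarrow> 'y \<Rightarrow> real) \<Rightarrow> real \<Rightarrow> 'x \<Rightarrow> 'y set" where
  "hd_supp P \<rho> \<epsilon> x = {y. \<rho> x y \<ge> hd_level P \<rho> \<epsilon> x}"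

definition eps_pushforward ::
  "('x \<Rightarrow> 'y::topological_space measure) \<Rightarrow> ('x \<Rightarrow> 'y \<Rightarrow> real) \<Rightarrow> real \<Rightarrow> ('x \<times> 'z::topological_space) set \<Rightarrow> ('y \<times> 'z) set" where
  "eps_pushforward P \<rho> \<epsilon> R = closure (\<Union>(x, z) \<in> R. hd_supp P \<rho> \<epsilon> x \<times> {z})"

definition eps_pullback ::
  "('x \<Rightarrow> 'y measure) \<Rightarrow> real \<Rightarrow> ('y \<times> 'z) set \<Rightarrow> ('x \<times> 'z) set" where
  "eps_pullback P \<epsilon> S = {(x, z). measure (P x) {y. (y, z) \<in> S} \<ge> 1 - \<epsilon>}"

end

theory Submission
  imports Defs
begin

lemma hd_measure:
  fixes M :: "'y::topological_space measure" and f :: "'y \<Rightarrow> real" and e :: real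
  assumes ps: "prob_space M" and sM: "sets M = sets borel"
    and fc: "continuous_on UNIV f" and fpos: "\<And>y. f y \<ge> 0"
    and e0: "0 \<le> e" and e1: "e < 1"
  shows "measure M {y. f y \<ge> Sup {l. l \<ge> 0 \<and> measure M {y. f y \<ge> l} \<ge> 1 - e}} \<ge> 1 - e"
proof -
  interpret prob_space M by fact
  have spM: "space M = UNIV" using sets_eq_imp_space_eq[OF sM] by simp
  have p1: "prob UNIV = 1" using prob_space spM by simp
  define L where "L = {l. l \<ge> 0 \<and> measure M {y. f y \<ge> l} \<ge> 1 - e}"
  have meas: "{y. f y \<ge> l} \<in> sets M" for l
  proof -
    have "closed {y. f y \<ge> l}"
      using fc by (intro closed_Collect_le) (auto intro: continuous_intros)
    then show ?thesis using sM by (simp add: borel_closed)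
  qed
  have mono: "measure M {y. f y \<ge> b} \<le> measure M {y. f y \<ge> a}" if "a \<le> b" for a b
    using that meas by (intro finite_measure_mono) auto
  have 0: "0 \<in> L" using fpos e0 by (simp add: L_def p1)
  have bdd: "bdd_above L"
  proof (rule ccontr)
    assume nb: "\<not> bdd_above L"
    have big: "measure M {y. f y \<ge> real n} \<ge> 1 - e" for n
    proof -
      from nb have "\<not> (\<forall>l\<in>L. l \<le> real n)" unfolding bdd_above_def by blast
      then obtain l where "l \<in> L" "l > real n" by (auto simp: not_le)
      then show ?thesis using mono[of "real n" l] unfolding L_def by auto
    qed
    have "(\<lambda>n. measure M {y. f y \<ge> real n}) \<longlonglongrightarrow> measure M (\<Inter>n. {y. f y \<ge> real n})"
      by (rule finite_Lim_measure_decseq) (auto simp: meas decseq_def)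
    moreover have "(\<Inter>n. {y. f y \<ge> real n}) = {}"
    proof -
      { fix y assume "\<forall>n. f y \<ge> real n"
        then have "f y \<ge> real (nat \<lceil>f y\<rceil> + 1)" by blast
        then have False by linarith }
      then show ?thesis by auto
    qed
    ultimately have "(\<lambda>n. measure M {y. f y \<ge> real n}) \<longlonglongrightarrow> 0" by simp
    then have "1 - e \<le> 0" by (rule LIMSEQ_le_const) (use big in auto)
    with e1 show False by simp
  qed
  define s where "s = Sup L"
  have s0: "s \<ge> 0" unfolding s_def using 0 bdd by (rule cSup_upper)
  have inL: "measure M {y. f y \<ge> l} \<ge> 1 - e" if "0 \<le> l" "l < s" for l
  proof -
    from that have "\<exists>l'\<in>L. l < l'" unfolding s_def using 0 bdd
      by (subst less_cSup_iff[symmetric]) auto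
    then obtain l' where "l' \<in> L" "l < l'" by blast
    then show ?thesis using mono[of l l'] unfolding L_def by auto
  qed
  have "1 - e \<le> measure M {y. f y \<ge> s}"
  proof (cases "s = 0")
    case True
    then show ?thesis using fpos e0 by (simp add: p1)
  next
    case False
    with s0 have sp: "s > 0" by simp
    define A where "A n = {y. f y \<ge> s * (1 - 1 / (real n + 2))}" for n :: nat
    have "(\<lambda>n. measure M (A n)) \<longlonglongrightarrow> measure M (\<Inter>n. A n)"
    proof (rule finite_Lim_measure_decseq)
      show "range A \<subseteq> sets M" using meas by (auto simp: A_def)
      show "decseq A"
      proof (rule decseq_SucI)
        fix n
        have "1 / (real (Suc n) + 2) \<le> 1 / (real n + 2)" by (simp add: frac_le)
        then have "s * (1 - 1 / (real n + 2)) \<le> s * (1 - 1 / (real (Suc n) + 2))"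
          using sp by (intro mult_left_mono) auto
        then show "A (Suc n) \<subseteq> A n" unfolding A_def by auto
      qed
    qed
    moreover have "(\<Inter>n. A n) = {y. f y \<ge> s}"
    proof
      show "{y. f y \<ge> s} \<subseteq> (\<Inter>n. A n)"
      proof
        fix y assume y: "y \<in> {y. f y \<ge> s}"
        have le: "s * (1 - 1 / (real n + 2)) \<le> s" for n
          using sp by (simp add: mult_le_cancel_left1)
        have "f y \<ge> s * (1 - 1 / (real n + 2))" for n
          using le[of n] y by simp
        then show "y \<in> (\<Inter>n. A n)" unfolding A_def by simp
      qed
    next
      show "(\<Inter>n. A n) \<subseteq> {y. f y \<ge> s}"
      proof
        fix y assume y: "y \<in> (\<Inter>n. A n)"
        have l0: "(\<lambda>n. 1 / real (n + 2)) \<longlonglongrightarrow> 0"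
          using LIMSEQ_ignore_initial_segment[OF lim_1_over_n, of 2] by simp
        have "(\<lambda>n. s * (1 - 1 / real (n + 2))) \<longlonglongrightarrow> s * (1 - 0)"
          by (intro tendsto_intros l0)
        then have "(\<lambda>n. s * (1 - 1 / (real n + 2))) \<longlonglongrightarrow> s * (1 - 0)"
          by (simp add: add.commute)
        then have "s \<le> f y"
          by (intro LIMSEQ_le_const2[where X="\<lambda>n. s * (1 - 1 / (real n + 2))"]) (use y A_def in auto)
        then show "y \<in> {y. f y \<ge> s}" by simp
      qed
    qed
    ultimately have lim: "(\<lambda>n. measure M (A n)) \<longlonglongrightarrow> measure M {y. f y \<ge> s}" by simp
    have "1 - e \<le> measure M (A n)" for n
    proof -
      have "0 \<le> s * (1 - 1 / (real n + 2))" using sp by (simp add: field_simps)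
      moreover have "s * (1 - 1 / (real n + 2)) < s" using sp by (simp add: field_simps)
      ultimately show ?thesis unfolding A_def by (rule inL)
    qed
    then have "1 - e \<le> measure M {y. f y \<ge> s}"
      by (intro LIMSEQ_le_const[OF lim]) auto
    then show ?thesis .
  qed
  then show ?thesis by (simp add: s_def L_def)
qed

theorem mainTheorem16:
  fixes P :: "'x::polish_space \<Rightarrow> 'y::polish_space measure"
    and \<mu> :: "'y measure"
    and \<rho> :: "'x \<Rightarrow> 'y \<Rightarrow> real"
    and \<epsilon> :: real
    and R :: "('x \<times> 'z::polish_space) set"
    and S :: "('y \<times> 'z) set"
  assumes "markov_kernel P" and "feller_kernel P" and "tight_kernel P"
    and "sets \<mu> = sets borel"
    and "\<And>x. continuous_on UNIV (\<rho> x)"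
    and "\<And>x y. \<rho> x y \<ge> 0"
    and "\<And>x. P x = density \<mu> (\<lambda>y. ennreal (\<rho> x y))"
    and "0 \<le> \<epsilon>" and "\<epsilon> < 1"
    and "closed R" and "closed S"
    and "eps_pushforward P \<rho> \<epsilon> R \<subseteq> S"
  shows "R \<subseteq> eps_pullback P \<epsilon> S"
proof
  fix p assume "p \<in> R"
  then obtain x z where p: "p = (x, z)" and xz: "(x, z) \<in> R" by (cases p) auto
  have ps: "prob_space (P x)" and sP: "sets (P x) = sets borel"
    using assms(1) unfolding markov_kernel_def by blast+
  interpret prob_space "P x" by fact
  have sub: "hd_supp P \<rho> \<epsilon> x \<subseteq> {y. (y, z) \<in> S}"
  proof
    fix y assume "y \<in> hd_supp P \<rho> \<epsilon> x"
    then have "(y, z) \<in> (\<Union>(x, z) \<in> R. hd_supp P \<rho> \<epsilon> x \<times> {z})"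
      using xz by (intro UN_I[of "(x, z)"]) auto
    then have "(y, z) \<in> eps_pushforward P \<rho> \<epsilon> R"
      unfolding eps_pushforward_def by (rule subsetD[OF closure_subset])
    then show "y \<in> {y. (y, z) \<in> S}" using assms(12) by (simp add: subset_iff)
  qed
  have cl: "closed {y. (y, z) \<in> S}"
  proof -
    have "closed ((\<lambda>y. (y, z)) -` S)"
      using assms(11) by (intro closed_vimage continuous_intros)
    then show ?thesis by (simp add: vimage_def)
  qed
  have "1 - \<epsilon> \<le> measure (P x) (hd_supp P \<rho> \<epsilon> x)"
    unfolding hd_supp_def hd_level_def
    by (rule hd_measure[OF ps sP assms(5) assms(6) assms(8) assms(9)])
  also have "\<dots> \<le> measure (P x) {y. (y, z) \<in> S}"
  proof (rule finite_measure_mono[OF sub])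
    show "{y. (y, z) \<in> S} \<in> sets (P x)" using cl sP by (simp add: borel_closed)
  qed
  finally show "p \<in> eps_pullback P \<epsilon> S" unfolding eps_pullback_def p by simp
qed

end
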